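(* For every multifield morphism $\sigma:F\to K$ between special multifields, the restriction $\sigma|_{F^\bullet}:F^\bullet\to K^\bullet$ is a morphism of special groups (where $F^\bullet$, $K^\bullet$ carry the special group structures $\langle a,b\rangle\equiv\langle c,d\rangle$ iff $ab=cd$ and $a\in c+d$); the assignments $F\mapsto F^\bullet$, $\sigma\mapsto\sigma|_{F^\bullet}$ define a functor $S$ from the category $\mathcal{SMF}$ of special multifields to the category $\mathcal{SG}$ of special groups.
   Context: A multiring is a tuple $(R,+,\cdot,-,0,1)$ with $+:R\times R\to\mathcal P(R)\setminus\{\emptyset\}$ satisfying: $z\in x+y\Rightarrow x\in z+(-y)$ and $y\in(-x)+z$; $y\in0+x\iff y=x$; $+$ associative and commutative; $(R,\cdot,1)$ a commutative monoid; $a0=0$; $c\in a+b\Rightarrow cd\in ad+bd$. A multifield has every nonzero element invertible. A multiring morphism $f$ satisfies $c\in a+b\Rightarrow f(c)\in f(a)+f(b)$, $f(-a)=-f(a)$, $f(0)=0$, $f(ab)=f(a)f(b)$, $f(1)=1$. A special multifield is a multifield $F$ such that, with $F^\bullet=F\setminus\{0\}$: (i) $a^2=1$ for $a\in F^\bullet$; (ii) $a+(-a)=F$ for $a\in F^\bullet$; (iii) $ab=cd$ and $a\in c+d$ imply $c\in a+b$ ($a,b,c,d\in F^\bullet$); (iv) $ab=cd=ef$, $a\in c+d$, $c\in e+f$ imply $a\in e+f$; (v) if there are $x,y,z\in F^\bullet$ with $ax=cy$, $a=xz$, $c=yz$, $a\in c+y$, $b\in x+z$, $d\in y+z$, then there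 are $t,v,w\in F^\bullet$ with $bt=cv$, $b=tw$, $c=vw$, $b\in c+v$, $a\in t+w$, $d\in v+w$. $\mathcal{SMF}$ has special multifields as objects and multiring morphisms as morphisms. A special group is $(G,-1,\equiv)$ with $G$ a group of exponent 2, $-1\in G$, $\equiv$ a relation on $G\times G$ satisfying: (SG0) equivalence relation; (SG1) $\langle a,b\rangle\equiv\langle b,a\rangle$; (SG2) $\langle a,-a\rangle\equiv\langle1,-1\rangle$; (SG3) $\langle a,b\rangle\equiv\langle c,d\rangle\Rightarrow ab=cd$; (SG4) $\langle a,b\rangle\equiv\langle c,d\rangle\Rightarrow\langle a,-c\rangle\equiv\langle -b,d\rangle$; (SG5) $\langle a,b\rangle\equiv\langle c,d\rangle\Rightarrow\langle ga,gb\rangle\equiv\langle gc,gd\rangle$; (SG6) the relation on $G^3$ given by $\langle a_1,a_2,a_3\rangle\equiv\langle b_1,b_2,b_3\rangle$ iff $\exists x,y,z$ with $\langle a_1,x\rangle\equiv\langle b_1,y\rangle$, $\langle a_2,a_3\rangle\equiv\langle x,z\rangle$, $\langle b_2,b_3\rangle\equiv\langle y,z\rangle$ is transitive. A morphism of special groups $f:G\to H$ is a group homomorphism with $f(-1)=-1$ and $\langle a,b\rangle\equiv_G\langle c,d\rangle\Rightarrow\langle f(a),f(b)\rangle\equiv_H\langle f(c),f(d)\rangle$. *)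

theory Defs
  imports Main
begin

record 'a mring =
  mcarrier :: "'a set"
  madd :: "'a \<Rightarrow> 'a \<Rightarrow> 'a set"
  mneg :: "'a \<Rightarrow> 'a"
  mmul :: "'a \<Rightarrow> 'a \<Rightarrow> 'a"
  mzero :: 'a
  mone :: 'a

definition set_add :: "('a, 'b) mring_scheme \<Rightarrow> 'a set \<Rightarrow> 'a \<Rightarrow> 'a set" where
  "set_add R A c = (\<Union>a\<in>A. madd R a c)"

definition add_set :: "('a, 'b) mring_scheme \<Rightarrow> 'a \<Rightarrow> 'a set \<Rightarrow> 'a set" where
  "add_set R a B = (\<Union>b\<in>B. madd R a b)"

definition multiring :: "('a, 'b) mring_scheme \<Rightarrow> bool" where
  "multiring R \<longleftrightarrow>
     (let C = mcarrier R; P = madd R; N = mneg R; M = mmul R; Z = mzero R; U = mone R in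
      (\<forall>a\<in>C. \<forall>b\<in>C. P a b \<noteq> {} \<and> P a b \<subseteq> C) \<and>
      (\<forall>a\<in>C. N a \<in> C) \<and> Z \<in> C \<and> U \<in> C \<and>
      (\<forall>a\<in>C. \<forall>b\<in>C. M a b \<in> C) \<and>
      (\<forall>x\<in>C. \<forall>y\<in>C. \<forall>z\<in>C. z \<in> P x y \<longrightarrow> x \<in> P z (N y) \<and> y \<in> P (N x) z) \<and>
      (\<forall>x\<in>C. \<forall>y\<in>C. y \<in> P Z x \<longleftrightarrow> y = x) \<and>
      (\<forall>a\<in>C. \<forall>b\<in>C. \<forall>c\<in>C. set_add R (P a b) c = add_set R a (P b c)) \<and>
      (\<forall>a\<in>C. \<forall>b\<in>C. P a b = P b a) \<and>
      (\<forall>a\<in>C. \<forall>b\<in>C. \<forall>c\<in>C. M (M a b) c = M a (M b c)) \<and>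
      (\<forall>a\<in>C. \<forall>b\<in>C. M a b = M b a) \<and>
      (\<forall>a\<in>C. M a U = a) \<and>
      (\<forall>a\<in>C. M a Z = Z) \<and>
      (\<forall>a\<in>C. \<forall>b\<in>C. \<forall>c\<in>C. \<forall>d\<in>C. c \<in> P a b \<longrightarrow> M c d \<in> P (M a d) (M b d)))"

definition multifield :: "('a, 'b) mring_scheme \<Rightarrow> bool" where
  "multifield F \<longleftrightarrow> multiring F \<and> mone F \<noteq> mzero F \<and>
     (\<forall>a\<in>mcarrier F. a \<noteq> mzero F \<longrightarrow> (\<exists>b\<in>mcarrier F. mmul F a b = mone F))"

definition nonzeros :: "('a, 'b) mring_scheme \<Rightarrow> 'a set" where
  "nonzeros F = mcarrier F - {mzero F}"

definition special_multifield :: "('a, 'b) mring_scheme \<Rightarrow> bool" where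
  "special_multifield F \<longleftrightarrow> multifield F \<and>
     (let G = nonzeros F; P = madd F; N = mneg F; M = mmul F; U = mone F in
      (\<forall>a\<in>G. M a a = U) \<and>
      (\<forall>a\<in>G. P a (N a) = mcarrier F) \<and>
      (\<forall>a\<in>G. \<forall>b\<in>G. \<forall>c\<in>G. \<forall>d\<in>G. M a b = M c d \<and> a \<in> P c d \<longrightarrow> c \<in> P a b) \<and>
      (\<forall>a\<in>G. \<forall>b\<in>G. \<forall>c\<in>G. \<forall>d\<in>G. \<forall>e\<in>G. \<forall>f\<in>G.
          M a b = M c d \<and> M c d = M e f \<and> a \<in> P c d \<and> c \<in> P e f \<longrightarrow> a \<in> P e f) \<and>
      (\<forall>a\<in>G. \<forall>b\<in>G. \<forall>c\<in>G. \<forall>d\<in>G.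
          (\<exists>x\<in>G. \<exists>y\<in>G. \<exists>z\<in>G. M a x = M c y \<and> a = M x z \<and> c = M y z \<and>
                 a \<in> P c y \<and> b \<in> P x z \<and> d \<in> P y z) \<longrightarrow>
          (\<exists>t\<in>G. \<exists>v\<in>G. \<exists>w\<in>G. M b t = M c v \<and> b = M t w \<and> c = M v w \<and>
                 b \<in> P c v \<and> a \<in> P t w \<and> d \<in> P v w)))"

definition mr_hom :: "('a, 'c) mring_scheme \<Rightarrow> ('b, 'd) mring_scheme \<Rightarrow> ('a \<Rightarrow> 'b) \<Rightarrow> bool" where
  "mr_hom F K f \<longleftrightarrow>
     (\<forall>a\<in>mcarrier F. f a \<in> mcarrier K) \<and>
     (\<forall>a\<in>mcarrier F. \<forall>b\<in>mcarrier F. \<forall>c\<in>mcarrier F.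
        c \<in> madd F a b \<longrightarrow> f c \<in> madd K (f a) (f b)) \<and>
     (\<forall>a\<in>mcarrier F. f (mneg F a) = mneg K (f a)) \<and>
     f (mzero F) = mzero K \<and>
     (\<forall>a\<in>mcarrier F. \<forall>b\<in>mcarrier F. f (mmul F a b) = mmul K (f a) (f b)) \<and>
     f (mone F) = mone K"

record 'a sgroup =
  scarrier :: "'a set"
  smul :: "'a \<Rightarrow> 'a \<Rightarrow> 'a"
  sone :: 'a
  sminus :: 'a
  seqv :: "'a \<Rightarrow> 'a \<Rightarrow> 'a \<Rightarrow> 'a \<Rightarrow> bool"  \<comment> \<open>seqv a b c d means <a,b> == <c,d>\<close>

definition sg_tern :: "('a, 'b) sgroup_scheme \<Rightarrow> 'a \<Rightarrow> 'a \<Rightarrow> 'a \<Rightarrow> 'a \<Rightarrow> 'a \<Rightarrow> 'a \<Rightarrow> bool" where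
  "sg_tern G a1 a2 a3 b1 b2 b3 \<longleftrightarrow>
     (\<exists>x\<in>scarrier G. \<exists>y\<in>scarrier G. \<exists>z\<in>scarrier G.
        seqv G a1 x b1 y \<and> seqv G a2 a3 x z \<and> seqv G b2 b3 y z)"

definition special_group :: "('a, 'b) sgroup_scheme \<Rightarrow> bool" where
  "special_group G \<longleftrightarrow>
    (let S = scarrier G; m = smul G; e = sone G; n = sminus G; E = seqv G in
     \<comment> \<open>group of exponent 2\<close>
     (\<forall>a\<in>S. \<forall>b\<in>S. m a b \<in> S) \<and> e \<in> S \<and>
     (\<forall>a\<in>S. \<forall>b\<in>S. \<forall>c\<in>S. m (m a b) c = m a (m b c)) \<and>
     (\<forall>a\<in>S. m e a = a \<and> m a e = a) \<and>
     (\<forall>a\<in>S. m a a = e) \<and>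
     n \<in> S \<and>
     \<comment> \<open>SG0: equivalence relation on S x S\<close>
     (\<forall>a\<in>S. \<forall>b\<in>S. E a b a b) \<and>
     (\<forall>a\<in>S. \<forall>b\<in>S. \<forall>c\<in>S. \<forall>d\<in>S. E a b c d \<longrightarrow> E c d a b) \<and>
     (\<forall>a\<in>S. \<forall>b\<in>S. \<forall>c\<in>S. \<forall>d\<in>S. \<forall>p\<in>S. \<forall>q\<in>S. E a b c d \<and> E c d p q \<longrightarrow> E a b p q) \<and>
     \<comment> \<open>SG1\<close>
     (\<forall>a\<in>S. \<forall>b\<in>S. E a b b a) \<and>
     \<comment> \<open>SG2\<close>
     (\<forall>a\<in>S. E a (m n a) e n) \<and>
     \<comment> \<open>SG3\<close>
     (\<forall>a\<in>S. \<forall>b\<in>S. \<forall>c\<in>S. \<forall>d\<in>S. E a b c d \<longrightarrow> m a b = m c d) \<and>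
     \<comment> \<open>SG4\<close>
     (\<forall>a\<in>S. \<forall>b\<in>S. \<forall>c\<in>S. \<forall>d\<in>S. E a b c d \<longrightarrow> E a (m n c) (m n b) d) \<and>
     \<comment> \<open>SG5\<close>
     (\<forall>a\<in>S. \<forall>b\<in>S. \<forall>c\<in>S. \<forall>d\<in>S. \<forall>g\<in>S. E a b c d \<longrightarrow> E (m g a) (m g b) (m g c) (m g d)) \<and>
     \<comment> \<open>SG6: transitivity of the ternary relation\<close>
     (\<forall>a1\<in>S. \<forall>a2\<in>S. \<forall>a3\<in>S. \<forall>b1\<in>S. \<forall>b2\<in>S. \<forall>b3\<in>S. \<forall>c1\<in>S. \<forall>c2\<in>S. \<forall>c3\<in>S.
        sg_tern G a1 a2 a3 b1 b2 b3 \<and> sg_tern G b1 b2 b3 c1 c2 c3 \<longrightarrow> sg_tern G a1 a2 a3 c1 c2 c3))"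

definition sg_hom :: "('a, 'c) sgroup_scheme \<Rightarrow> ('b, 'd) sgroup_scheme \<Rightarrow> ('a \<Rightarrow> 'b) \<Rightarrow> bool" where
  "sg_hom G H f \<longleftrightarrow>
     (\<forall>a\<in>scarrier G. f a \<in> scarrier H) \<and>
     (\<forall>a\<in>scarrier G. \<forall>b\<in>scarrier G. f (smul G a b) = smul H (f a) (f b)) \<and>
     f (sminus G) = sminus H \<and>
     (\<forall>a\<in>scarrier G. \<forall>b\<in>scarrier G. \<forall>c\<in>scarrier G. \<forall>d\<in>scarrier G.
        seqv G a b c d \<longrightarrow> seqv H (f a) (f b) (f c) (f d))"

definition S_obj :: "('a, 'b) mring_scheme \<Rightarrow> 'a sgroup" where
  "S_obj F = \<lparr> scarrier = nonzeros F, smul = mmul F, sone = mone F, sminus = mneg F (mone F),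
               seqv = (\<lambda>a b c d. mmul F a b = mmul F c d \<and> a \<in> madd F c d) \<rparr>"

definition S_mor :: "('a, 'c) mring_scheme \<Rightarrow> ('a \<Rightarrow> 'b) \<Rightarrow> 'a \<Rightarrow> 'b" where
  "S_mor F \<sigma> = (\<lambda>x. if x \<in> nonzeros F then \<sigma> x else undefined)"

end

theory Submission
  imports Defs
begin

locale smf =
  fixes F :: "('a, 'b) mring_scheme"
  assumes sm: "special_multifield F"
begin

abbreviation "Cr \<equiv> mcarrier F"
abbreviation "Gr \<equiv> nonzeros F"
abbreviation "pl \<equiv> madd F"
abbreviation "ng \<equiv> mneg F"
abbreviation "ml \<equiv> mmul F"
abbreviation "zr \<equiv> mzero F"
abbreviation "un \<equiv> mone F"

lemma mf: "multifield F" using sm unfolding special_multifield_def by blast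
lemma mr: "multiring F" using mf unfolding multifield_def by blast
lemmas mrc = mr[unfolded multiring_def Let_def]
lemmas smc = sm[unfolded special_multifield_def Let_def]
lemma un_zr: "un \<noteq> zr" using mf unfolding multifield_def by blast

lemma Gr_iff: "x \<in> Gr \<longleftrightarrow> x \<in> Cr \<and> x \<noteq> zr" unfolding nonzeros_def by blast

lemma add_sub: "a\<in>Cr \<Longrightarrow> b\<in>Cr \<Longrightarrow> pl a b \<subseteq> Cr"
  using mrc[THEN conjunct1] by blast
lemma neg_C: "a\<in>Cr \<Longrightarrow> ng a \<in> Cr"
  using mrc[THEN conjunct2, THEN conjunct1] by blast
lemma zr_C: "zr \<in> Cr"
  using mrc[THEN conjunct2, THEN conjunct2, THEN conjunct1] by blast
lemma un_C: "un \<in> Cr"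
  using mrc[THEN conjunct2, THEN conjunct2, THEN conjunct2, THEN conjunct1] by blast
lemma mul_C: "a\<in>Cr \<Longrightarrow> b\<in>Cr \<Longrightarrow> ml a b \<in> Cr"
  using mrc[THEN conjunct2, THEN conjunct2, THEN conjunct2, THEN conjunct2, THEN conjunct1] by blast
lemma rev1: "x\<in>Cr \<Longrightarrow> y\<in>Cr \<Longrightarrow> z\<in>Cr \<Longrightarrow> z \<in> pl x y \<Longrightarrow> x \<in> pl z (ng y)"
  using mrc[THEN conjunct2, THEN conjunct2, THEN conjunct2, THEN conjunct2, THEN conjunct2, THEN conjunct1] by blast
lemma zadd: "x\<in>Cr \<Longrightarrow> y\<in>Cr \<Longrightarrow> y \<in> pl zr x \<longleftrightarrow> y = x"
  using mrc[THEN conjunct2, THEN conjunct2, THEN conjunct2, THEN conjunct2, THEN conjunct2, THEN conjunct2, THEN conjunct1] by blast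
lemma pcomm: "a\<in>Cr \<Longrightarrow> b\<in>Cr \<Longrightarrow> pl a b = pl b a"
  using mrc[THEN conjunct2, THEN conjunct2, THEN conjunct2, THEN conjunct2, THEN conjunct2, THEN conjunct2, THEN conjunct2, THEN conjunct2, THEN conjunct1] by blast
lemma massoc: "a\<in>Cr \<Longrightarrow> b\<in>Cr \<Longrightarrow> c\<in>Cr \<Longrightarrow> ml (ml a b) c = ml a (ml b c)"
  using mrc[THEN conjunct2, THEN conjunct2, THEN conjunct2, THEN conjunct2, THEN conjunct2, THEN conjunct2, THEN conjunct2, THEN conjunct2, THEN conjunct2, THEN conjunct1] by blast
lemma mcomm: "a\<in>Cr \<Longrightarrow> b\<in>Cr \<Longrightarrow> ml a b = ml b a"
  using mrc[THEN conjunct2, THEN conjunct2, THEN conjunct2, THEN conjunct2, THEN conjunct2, THEN conjunct2, THEN conjunct2, THEN conjunct2, THEN conjunct2, THEN conjunct2, THEN conjunct1] by blast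
lemma mone_r: "a\<in>Cr \<Longrightarrow> ml a un = a"
  using mrc[THEN conjunct2, THEN conjunct2, THEN conjunct2, THEN conjunct2, THEN conjunct2, THEN conjunct2, THEN conjunct2, THEN conjunct2, THEN conjunct2, THEN conjunct2, THEN conjunct2, THEN conjunct1] by blast
lemma mzero_r: "a\<in>Cr \<Longrightarrow> ml a zr = zr"
  using mrc[THEN conjunct2, THEN conjunct2, THEN conjunct2, THEN conjunct2, THEN conjunct2, THEN conjunct2, THEN conjunct2, THEN conjunct2, THEN conjunct2, THEN conjunct2, THEN conjunct2, THEN conjunct2, THEN conjunct1] by blast
lemma distr: "a\<in>Cr \<Longrightarrow> b\<in>Cr \<Longrightarrow> c\<in>Cr \<Longrightarrow> d\<in>Cr \<Longrightarrow> c \<in> pl a b \<Longrightarrow> ml c d \<in> pl (ml a d) (ml b d)"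
  using mrc[THEN conjunct2, THEN conjunct2, THEN conjunct2, THEN conjunct2, THEN conjunct2, THEN conjunct2, THEN conjunct2, THEN conjunct2, THEN conjunct2, THEN conjunct2, THEN conjunct2, THEN conjunct2, THEN conjunct2] by blast

lemma mlcomm: "a\<in>Cr \<Longrightarrow> b\<in>Cr \<Longrightarrow> c\<in>Cr \<Longrightarrow> ml a (ml b c) = ml b (ml a c)"
  by (metis massoc mcomm)
lemma mone_l: "a\<in>Cr \<Longrightarrow> ml un a = a"
  by (metis mcomm mone_r un_C)

lemmas mac = massoc mcomm mlcomm

lemma sq: "a\<in>Gr \<Longrightarrow> ml a a = un"
  using smc[THEN conjunct2, THEN conjunct1] by blast
lemma opp: "a\<in>Gr \<Longrightarrow> pl a (ng a) = Cr"
  using smc[THEN conjunct2, THEN conjunct2, THEN conjunct1] by blast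
lemma s3: "a\<in>Gr \<Longrightarrow> b\<in>Gr \<Longrightarrow> c\<in>Gr \<Longrightarrow> d\<in>Gr \<Longrightarrow> ml a b = ml c d \<Longrightarrow> a \<in> pl c d \<Longrightarrow> c \<in> pl a b"
  using smc[THEN conjunct2, THEN conjunct2, THEN conjunct2, THEN conjunct1] by blast
lemma s4: "a\<in>Gr \<Longrightarrow> b\<in>Gr \<Longrightarrow> c\<in>Gr \<Longrightarrow> d\<in>Gr \<Longrightarrow> e\<in>Gr \<Longrightarrow> f\<in>Gr \<Longrightarrow>
   ml a b = ml c d \<Longrightarrow> ml c d = ml e f \<Longrightarrow> a \<in> pl c d \<Longrightarrow> c \<in> pl e f \<Longrightarrow> a \<in> pl e f"
  using smc[THEN conjunct2, THEN conjunct2, THEN conjunct2, THEN conjunct2, THEN conjunct1] by blast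
lemma s5: "a\<in>Gr \<Longrightarrow> b\<in>Gr \<Longrightarrow> c\<in>Gr \<Longrightarrow> d\<in>Gr \<Longrightarrow>
          (\<exists>x\<in>Gr. \<exists>y\<in>Gr. \<exists>z\<in>Gr. ml a x = ml c y \<and> a = ml x z \<and> c = ml y z \<and>
                 a \<in> pl c y \<and> b \<in> pl x z \<and> d \<in> pl y z) \<Longrightarrow>
          (\<exists>t\<in>Gr. \<exists>v\<in>Gr. \<exists>w\<in>Gr. ml b t = ml c v \<and> b = ml t w \<and> c = ml v w \<and>
                 b \<in> pl c v \<and> a \<in> pl t w \<and> d \<in> pl v w)"
  using smc[THEN conjunct2, THEN conjunct2, THEN conjunct2, THEN conjunct2, THEN conjunct2] by blast

lemma neg_zr: "ng zr = zr"
proof -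
  have "zr \<in> pl zr zr" using zadd zr_C by blast
  hence "zr \<in> pl zr (ng zr)" using rev1 zr_C by blast
  thus ?thesis using zadd zr_C neg_C by metis
qed

lemma neg_neg: "a\<in>Cr \<Longrightarrow> ng (ng a) = a"
proof -
  assume a: "a\<in>Cr"
  have "a \<in> pl zr a" using zadd zr_C a by blast
  hence "zr \<in> pl a (ng a)" using rev1 zr_C a by blast
  hence "a \<in> pl zr (ng (ng a))" using rev1 zr_C a neg_C by blast
  thus ?thesis using zadd a neg_C by metis
qed

lemma self_add: "a\<in>Gr \<Longrightarrow> b\<in>Gr \<Longrightarrow> a \<in> pl a b"
proof -
  assume a: "a\<in>Gr" and b: "b\<in>Gr"
  have aC: "a\<in>Cr" "b\<in>Cr" using a b Gr_iff by auto
  have "b \<in> pl a (ng a)" using opp[OF a] aC by blast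
  hence "a \<in> pl b (ng (ng a))" using rev1 aC neg_C by blast
  thus ?thesis using neg_neg aC pcomm by metis
qed

lemma mul_G: "a\<in>Gr \<Longrightarrow> b\<in>Gr \<Longrightarrow> ml a b \<in> Gr"
proof -
  assume a: "a\<in>Gr" and b: "b\<in>Gr"
  have aC: "a\<in>Cr" "b\<in>Cr" using a b Gr_iff by auto
  have "ml a (ml a b) = b" using massoc[of a a b] aC sq[OF a] mone_l by simp
  thus ?thesis using mzero_r aC b Gr_iff mul_C by metis
qed

lemma un_G: "un \<in> Gr" using un_C un_zr Gr_iff by blast

lemma negun_G: "ng un \<in> Gr"
proof -
  have "un \<in> pl zr un" using zadd zr_C un_C by blast
  hence "zr \<in> pl un (ng un)" using rev1 zr_C un_C by blast
  moreover have "ng un \<in> Cr" using neg_C un_C by blast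
  ultimately show ?thesis using Gr_iff zadd pcomm un_C zr_C un_zr by metis
qed

lemma neg_mul: "a\<in>Cr \<Longrightarrow> ml (ng un) a = ng a"
proof -
  assume a: "a\<in>Cr"
  have "un \<in> pl zr un" using zadd zr_C un_C by blast
  hence "zr \<in> pl un (ng un)" using rev1 zr_C un_C by blast
  hence "ml zr a \<in> pl (ml un a) (ml (ng un) a)" using distr un_C neg_C zr_C a by blast
  hence 1: "zr \<in> pl a (ml (ng un) a)" using mzero_r mone_l mcomm a zr_C by metis
  have yC: "ml (ng un) a \<in> Cr" using mul_C neg_C un_C a by blast
  hence "a \<in> pl zr (ng (ml (ng un) a))" using rev1 1 a zr_C by blast
  hence "a = ng (ml (ng un) a)" using zadd a yC neg_C by blast
  thus ?thesis using neg_neg yC by metis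
qed

definition E where "E a b c d \<longleftrightarrow> ml a b = ml c d \<and> a \<in> pl c d"

lemma GC: "a \<in> Gr \<Longrightarrow> a \<in> Cr" using Gr_iff by blast

lemma E_refl: "a\<in>Gr \<Longrightarrow> b\<in>Gr \<Longrightarrow> E a b a b" unfolding E_def using self_add by blast
lemma E_sym: "a\<in>Gr \<Longrightarrow> b\<in>Gr \<Longrightarrow> c\<in>Gr \<Longrightarrow> d\<in>Gr \<Longrightarrow> E a b c d \<Longrightarrow> E c d a b"
  unfolding E_def using s3 by metis
lemma E_trans: "a\<in>Gr \<Longrightarrow> b\<in>Gr \<Longrightarrow> c\<in>Gr \<Longrightarrow> d\<in>Gr \<Longrightarrow> e\<in>Gr \<Longrightarrow> f\<in>Gr \<Longrightarrow> E a b c d \<Longrightarrow> E c d e f \<Longrightarrow> E a b e f"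
  unfolding E_def using s4 by metis
lemma E_swap2: "a\<in>Gr \<Longrightarrow> b\<in>Gr \<Longrightarrow> c\<in>Gr \<Longrightarrow> d\<in>Gr \<Longrightarrow> E a b c d \<Longrightarrow> E a b d c"
  unfolding E_def using pcomm mcomm GC by metis
lemma E_swap1: "a\<in>Gr \<Longrightarrow> b\<in>Gr \<Longrightarrow> c\<in>Gr \<Longrightarrow> d\<in>Gr \<Longrightarrow> E a b c d \<Longrightarrow> E b a c d"
proof -
  assume g: "a\<in>Gr" "b\<in>Gr" "c\<in>Gr" "d\<in>Gr" and e: "E a b c d"
  have "E b a a b" unfolding E_def using self_add g pcomm mcomm GC by metis
  thus ?thesis using E_trans g e by blast
qed
lemma gg: "g\<in>Gr \<Longrightarrow> t\<in>Cr \<Longrightarrow> ml g (ml g t) = t"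
  using GC by (simp add: massoc[symmetric] sq mone_l)

lemma E_scale: "a\<in>Gr \<Longrightarrow> b\<in>Gr \<Longrightarrow> c\<in>Gr \<Longrightarrow> d\<in>Gr \<Longrightarrow> g\<in>Gr \<Longrightarrow> E a b c d \<Longrightarrow> E (ml g a) (ml g b) (ml g c) (ml g d)"
proof -
  assume g: "a\<in>Gr" "b\<in>Gr" "c\<in>Gr" "d\<in>Gr" "g\<in>Gr" and e: "E a b c d"
  have C: "a\<in>Cr" "b\<in>Cr" "c\<in>Cr" "d\<in>Cr" "g\<in>Cr" using g GC by auto
  have p: "\<And>x y. x\<in>Cr \<Longrightarrow> y\<in>Cr \<Longrightarrow> ml (ml g x) (ml g y) = ml x y"
  proof -
    fix x y assume "x\<in>Cr" "y\<in>Cr"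
    thus "ml (ml g x) (ml g y) = ml x y"
      using C by (simp add: mac mul_C gg[OF g(5)])
  qed
  have "ml a g \<in> pl (ml c g) (ml d g)" using distr C e unfolding E_def by blast
  thus ?thesis using e p C mcomm unfolding E_def by metis
qed

definition T where "T a1 a2 a3 b1 b2 b3 \<longleftrightarrow>
  (\<exists>x\<in>Gr. \<exists>y\<in>Gr. \<exists>z\<in>Gr. E a1 x b1 y \<and> E a2 a3 x z \<and> E b2 b3 y z)"

lemma T_det: assumes g: "a1\<in>Gr" "a2\<in>Gr" "a3\<in>Gr" "b1\<in>Gr" "b2\<in>Gr" "b3\<in>Gr"
  and t: "T a1 a2 a3 b1 b2 b3" shows "ml a1 (ml a2 a3) = ml b1 (ml b2 b3)"
proof -
  from t obtain x y z where xyz: "x\<in>Gr" "y\<in>Gr" "z\<in>Gr" "E a1 x b1 y" "E a2 a3 x z" "E b2 b3 y z"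
    unfolding T_def by blast
  have "ml a1 (ml a2 a3) = ml a1 (ml x z)" using xyz unfolding E_def by simp
  also have "\<dots> = ml (ml a1 x) z" using massoc GC g xyz by simp
  also have "\<dots> = ml (ml b1 y) z" using xyz unfolding E_def by simp
  also have "\<dots> = ml b1 (ml y z)" using massoc GC g xyz by simp
  also have "\<dots> = ml b1 (ml b2 b3)" using xyz unfolding E_def by simp
  finally show ?thesis .
qed

lemma T_scale: assumes g: "a1\<in>Gr" "a2\<in>Gr" "a3\<in>Gr" "b1\<in>Gr" "b2\<in>Gr" "b3\<in>Gr" "g\<in>Gr"
  and t: "T a1 a2 a3 b1 b2 b3"
  shows "T (ml g a1) (ml g a2) (ml g a3) (ml g b1) (ml g b2) (ml g b3)"
proof -
  from t obtain x y z where xyz: "x\<in>Gr" "y\<in>Gr" "z\<in>Gr" "E a1 x b1 y" "E a2 a3 x z" "E b2 b3 y z"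
    unfolding T_def by blast
  have "E (ml g a1) (ml g x) (ml g b1) (ml g y)" using E_scale[OF g(1) xyz(1) g(4) xyz(2) g(7) xyz(4)] .
  moreover have "E (ml g a2) (ml g a3) (ml g x) (ml g z)" using E_scale[OF g(2) g(3) xyz(1) xyz(3) g(7) xyz(5)] .
  moreover have "E (ml g b2) (ml g b3) (ml g y) (ml g z)" using E_scale[OF g(5) g(6) xyz(2) xyz(3) g(7) xyz(6)] .
  moreover have "ml g x \<in> Gr" "ml g y \<in> Gr" "ml g z \<in> Gr" using mul_G g xyz by auto
  ultimately show ?thesis unfolding T_def by blast
qed

lemma T_sym: assumes t: "T a1 a2 a3 b1 b2 b3" and g: "a1\<in>Gr" "a2\<in>Gr" "a3\<in>Gr" "b1\<in>Gr" "b2\<in>Gr" "b3\<in>Gr"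
  shows "T b1 b2 b3 a1 a2 a3"
proof -
  from t obtain x y z where xyz: "x\<in>Gr" "y\<in>Gr" "z\<in>Gr" "E a1 x b1 y" "E a2 a3 x z" "E b2 b3 y z"
    unfolding T_def by blast
  have "E b1 y a1 x" using E_sym[OF g(1) xyz(1) g(4) xyz(2) xyz(4)] .
  thus ?thesis unfolding T_def using xyz by blast
qed

lemma T_sw23: assumes t: "T a1 a2 a3 b1 b2 b3" and g: "a1\<in>Gr" "a2\<in>Gr" "a3\<in>Gr" "b1\<in>Gr" "b2\<in>Gr" "b3\<in>Gr"
  shows "T a1 a3 a2 b1 b2 b3"
proof -
  from t obtain x y z where xyz: "x\<in>Gr" "y\<in>Gr" "z\<in>Gr" "E a1 x b1 y" "E a2 a3 x z" "E b2 b3 y z"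
    unfolding T_def by blast
  have "E a3 a2 x z" using E_swap1[OF g(2) g(3) xyz(1) xyz(3) xyz(5)] .
  thus ?thesis unfolding T_def using xyz by blast
qed

lemma v_swap: assumes g: "A\<in>Gr" "B\<in>Gr" "C\<in>Gr" "D\<in>Gr"
  and t: "T A B (ml A B) C D (ml C D)"
  shows "T B A (ml A B) C D (ml C D)"
proof -
  have gc: "A\<in>Cr" "B\<in>Cr" "C\<in>Cr" "D\<in>Cr" using g GC by auto
  have k1: "ml B (ml A B) = A" using gc by (simp add: mac mul_C sq[OF g(2)] mone_r)
  have k2: "ml D (ml C D) = C" using gc by (simp add: mac mul_C sq[OF g(4)] mone_r)
  have k3: "ml A (ml A B) = B" using gc by (simp add: massoc[symmetric] sq[OF g(1)] mone_l)
  from t obtain x y z where xyz: "x\<in>Gr" "y\<in>Gr" "z\<in>Gr" "E A x C y" "E B (ml A B) x z" "E D (ml C D) y z"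
    unfolding T_def by blast
  have "\<exists>x\<in>Gr. \<exists>y\<in>Gr. \<exists>z\<in>Gr. ml A x = ml C y \<and> A = ml x z \<and> C = ml y z \<and>
                 A \<in> pl C y \<and> B \<in> pl x z \<and> D \<in> pl y z"
    using xyz k1 k2 unfolding E_def by metis
  then obtain t v w where tvw: "t\<in>Gr" "v\<in>Gr" "w\<in>Gr" "ml B t = ml C v" "B = ml t w" "C = ml v w"
                 "B \<in> pl C v" "A \<in> pl t w" "D \<in> pl v w"
    using s5[OF g(1) g(2) g(3) g(4)] by blast
  show ?thesis unfolding T_def E_def using tvw k2 k3 by metis
qed

lemma T_sw12: assumes g: "a1\<in>Gr" "a2\<in>Gr" "a3\<in>Gr" "b1\<in>Gr" "b2\<in>Gr" "b3\<in>Gr"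
  and t: "T a1 a2 a3 b1 b2 b3"
  shows "T a2 a1 a3 b1 b2 b3"
proof -
  define d where "d = ml a1 (ml a2 a3)"
  have dd: "d = ml b1 (ml b2 b3)" using T_det[OF g t] d_def by simp
  have gc: "a1\<in>Cr" "a2\<in>Cr" "a3\<in>Cr" "b1\<in>Cr" "b2\<in>Cr" "b3\<in>Cr" using g GC by auto
  have dG: "d \<in> Gr" unfolding d_def using mul_G g by blast
  have dC: "d \<in> Cr" using dG GC by blast
  have bk: "\<And>x. x\<in>Cr \<Longrightarrow> ml d (ml d x) = x" using dC by (simp add: massoc[symmetric] sq[OF dG] mone_l)
  have e1: "ml d a3 = ml (ml d a1) (ml d a2)"
    unfolding d_def using gc by (simp add: mac mul_C gg[OF g(1)] gg[OF g(2)] gg[OF g(3)])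
  have e2: "ml d b3 = ml (ml d b1) (ml d b2)"
    unfolding dd using gc by (simp add: mac mul_C gg[OF g(4)] gg[OF g(5)] gg[OF g(6)])
  have m: "ml d a1 \<in> Gr" "ml d a2 \<in> Gr" "ml d a3 \<in> Gr" "ml d b1 \<in> Gr" "ml d b2 \<in> Gr" "ml d b3 \<in> Gr"
    using mul_G dG g by auto
  have t1: "T (ml d a1) (ml d a2) (ml d a3) (ml d b1) (ml d b2) (ml d b3)"
    by (rule T_scale[OF g dG t])
  hence t2: "T (ml d a1) (ml d a2) (ml (ml d a1) (ml d a2)) (ml d b1) (ml d b2) (ml (ml d b1) (ml d b2))"
    by (simp only: e1 e2)
  have t3: "T (ml d a2) (ml d a1) (ml (ml d a1) (ml d a2)) (ml d b1) (ml d b2) (ml (ml d b1) (ml d b2))"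
    by (rule v_swap[OF m(1) m(2) m(4) m(5) t2])
  hence t4: "T (ml d a2) (ml d a1) (ml d a3) (ml d b1) (ml d b2) (ml d b3)"
    by (simp only: e1[symmetric] e2[symmetric])
  have "T (ml d (ml d a2)) (ml d (ml d a1)) (ml d (ml d a3)) (ml d (ml d b1)) (ml d (ml d b2)) (ml d (ml d b3))"
    by (rule T_scale[OF m(2) m(1) m(3) m(4) m(5) m(6) dG t4])
  thus ?thesis using bk gc by simp
qed

lemma T_trans: assumes g: "a1\<in>Gr" "a2\<in>Gr" "a3\<in>Gr" "b1\<in>Gr" "b2\<in>Gr" "b3\<in>Gr" "c1\<in>Gr" "c2\<in>Gr" "c3\<in>Gr"
  and t1: "T a1 a2 a3 b1 b2 b3" and t2: "T b1 b2 b3 c1 c2 c3"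
  shows "T a1 a2 a3 c1 c2 c3"
proof -
  from t1 obtain x y z where xyz: "x\<in>Gr" "y\<in>Gr" "z\<in>Gr" "E a1 x b1 y" "E a2 a3 x z" "E b2 b3 y z"
    unfolding T_def by blast
  from t2 obtain x' y' z' where xyz': "x'\<in>Gr" "y'\<in>Gr" "z'\<in>Gr" "E b1 x' c1 y'" "E b2 b3 x' z'" "E c2 c3 y' z'"
    unfolding T_def by blast
  have "E y z b2 b3" by (rule E_sym[OF g(5) g(6) xyz(2) xyz(3) xyz(6)])
  hence "E y z x' z'" by (rule E_trans[OF xyz(2) xyz(3) g(5) g(6) xyz'(1) xyz'(3) _ xyz'(5)])
  hence "E z y x' z'" by (rule E_swap1[OF xyz(2) xyz(3) xyz'(1) xyz'(3)])
  hence h1: "E z y z' x'" by (rule E_swap2[OF xyz(3) xyz(2) xyz'(1) xyz'(3)])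
  have "E x a1 b1 y" by (rule E_swap1[OF g(1) xyz(1) g(4) xyz(2) xyz(4)])
  hence h2: "E x a1 y b1" by (rule E_swap2[OF xyz(1) g(1) g(4) xyz(2)])
  have "E c1 y' b1 x'" by (rule E_sym[OF g(4) xyz'(1) g(7) xyz'(2) xyz'(4)])
  hence "E y' c1 b1 x'" by (rule E_swap1[OF g(7) xyz'(2) g(4) xyz'(1)])
  hence h3: "E y' c1 x' b1" by (rule E_swap2[OF xyz'(2) g(7) g(4) xyz'(1)])
  have G: "x\<in>Gr" "y\<in>Gr" "z\<in>Gr" "x'\<in>Gr" "y'\<in>Gr" "z'\<in>Gr" "a1\<in>Gr" "b1\<in>Gr" "c1\<in>Gr"
    using xyz xyz' g by auto
  have "T z x a1 z' y' c1" unfolding T_def using h1 h2 h3 G by blast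
  hence "T x z a1 z' y' c1" using T_sw12 G by blast
  hence "T x a1 z z' y' c1" using T_sw23 G by blast
  hence "T a1 x z z' y' c1" using T_sw12 G by blast
  hence "T z' y' c1 a1 x z" using T_sym G by blast
  hence "T y' z' c1 a1 x z" using T_sw12 G by blast
  hence "T y' c1 z' a1 x z" using T_sw23 G by blast
  hence "T c1 y' z' a1 x z" using T_sw12 G by blast
  hence "T a1 x z c1 y' z'" using T_sym G by blast
  then obtain X Y Z where W: "X\<in>Gr" "Y\<in>Gr" "Z\<in>Gr" "E a1 X c1 Y" "E x z X Z" "E y' z' Y Z"
    unfolding T_def by blast
  have "E a2 a3 X Z" by (rule E_trans[OF g(2) g(3) xyz(1) xyz(3) W(1) W(3) xyz(5) W(5)])
  moreover have "E c2 c3 Y Z" by (rule E_trans[OF g(8) g(9) xyz'(2) xyz'(3) W(2) W(3) xyz'(6) W(6)])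
  ultimately show ?thesis unfolding T_def using W by blast
qed

lemma sc: "scarrier (S_obj F) = Gr" "smul (S_obj F) = ml" "sone (S_obj F) = un"
  "sminus (S_obj F) = ng un" "seqv (S_obj F) = E"
  by (auto simp: S_obj_def E_def fun_eq_iff)

lemma tern: "sg_tern (S_obj F) = T"
  by (auto simp: sg_tern_def T_def sc fun_eq_iff)

lemma E_comm: "a\<in>Gr \<Longrightarrow> b\<in>Gr \<Longrightarrow> E a b b a"
proof -
  assume g: "a\<in>Gr" "b\<in>Gr"
  have "ml a b = ml b a" using mcomm GC g by blast
  moreover have "a \<in> pl b a" using self_add[OF g] pcomm GC g by simp
  ultimately show ?thesis unfolding E_def by blast
qed

lemma SG2: "a\<in>Gr \<Longrightarrow> E a (ml (ng un) a) un (ng un)"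
proof -
  assume a: "a \<in> Gr"
  have aC: "a \<in> Cr" using a GC by blast
  have n: "ng un \<in> Cr" using negun_G GC by blast
  have "ml a (ml (ng un) a) = ml (ng un) (ml a a)" using mlcomm[OF aC n aC] .
  also have "\<dots> = ng un" using sq[OF a] mone_r[OF n] by simp
  finally have 1: "ml a (ml (ng un) a) = ng un" .
  moreover have "ml un (ng un) = ng un" using mone_l n by blast
  moreover have "a \<in> pl un (ng un)" using opp[OF un_G] aC by blast
  ultimately show "E a (ml (ng un) a) un (ng un)" unfolding E_def by simp
qed

lemma SG4: assumes g: "a\<in>Gr" "b\<in>Gr" "c\<in>Gr" "d\<in>Gr" and e: "E a b c d"
  shows "E a (ml (ng un) c) (ml (ng un) b) d"
proof -
  have C: "a\<in>Cr" "b\<in>Cr" "c\<in>Cr" "d\<in>Cr" using g GC by auto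
  have n: "ng un \<in> Cr" using negun_G GC by blast
  have h: "ml a b = ml c d" using e unfolding E_def by blast
  have "ml (ml a b) (ml b c) = ml a (ml b (ml b c))" using massoc C mul_C by simp
  also have "\<dots> = ml a c" using gg[OF g(2) C(3)] by simp
  finally have 1: "ml (ml a b) (ml b c) = ml a c" .
  have "ml (ml c d) (ml b c) = ml (ml d c) (ml c b)" using mcomm C by simp
  also have "\<dots> = ml d (ml c (ml c b))" using massoc C mul_C by simp
  also have "\<dots> = ml d b" using gg[OF g(3) C(2)] by simp
  also have "\<dots> = ml b d" using mcomm C by simp
  finally have 2: "ml (ml c d) (ml b c) = ml b d" .
  have acbd: "ml a c = ml b d" using 1 2 h by simp
  have "ml a (ml (ng un) c) = ml (ng un) (ml a c)" using mlcomm[OF C(1) n C(3)] .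
  also have "\<dots> = ml (ng un) (ml b d)" using acbd by simp
  also have "\<dots> = ml (ml (ng un) b) d" using massoc[OF n C(2) C(4)] by simp
  finally have p: "ml a (ml (ng un) c) = ml (ml (ng un) b) d" .
  have "E a b d c" using E_swap2 g e by blast
  hence "E d c a b" using E_sym g by blast
  hence "d \<in> pl a b" unfolding E_def by blast
  hence "a \<in> pl d (ng b)" using rev1 C by blast
  hence "a \<in> pl (ng b) d" using pcomm C neg_C by simp
  hence "a \<in> pl (ml (ng un) b) d" using neg_mul[OF C(2)] by simp
  thus "E a (ml (ng un) c) (ml (ng un) b) d" using p unfolding E_def by blast
qed

lemma SG: "special_group (S_obj F)"
  unfolding special_group_def Let_def sc tern
proof (intro conjI ballI impI)
  fix a b assume "a\<in>Gr" "b\<in>Gr" thus "ml a b \<in> Gr" by (rule mul_G)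
next
  show "un \<in> Gr" by (rule un_G)
next
  fix a b c assume "a\<in>Gr" "b\<in>Gr" "c\<in>Gr" thus "ml (ml a b) c = ml a (ml b c)" using massoc GC by blast
next
  fix a assume "a\<in>Gr" thus "ml un a = a" using mone_l GC by blast
next
  fix a assume "a\<in>Gr" thus "ml a un = a" using mone_r GC by blast
next
  fix a assume "a\<in>Gr" thus "ml a a = un" by (rule sq)
next
  show "ng un \<in> Gr" by (rule negun_G)
next
  fix a b assume "a\<in>Gr" "b\<in>Gr" thus "E a b a b" by (rule E_refl)
next
  fix a b c d assume "a\<in>Gr" "b\<in>Gr" "c\<in>Gr" "d\<in>Gr" "E a b c d" thus "E c d a b" by (rule E_sym)
next
  fix a b c d p q assume g: "a\<in>Gr" "b\<in>Gr" "c\<in>Gr" "d\<in>Gr" "p\<in>Gr" "q\<in>Gr" and e: "E a b c d \<and> E c d p q"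
  thus "E a b p q" using E_trans[OF g] by blast
next
  fix a b assume "a\<in>Gr" "b\<in>Gr" thus "E a b b a" by (rule E_comm)
next
  fix a assume "a\<in>Gr" thus "E a (ml (ng un) a) un (ng un)" by (rule SG2)
next
  fix a b c d assume "E a b c d" thus "ml a b = ml c d" unfolding E_def by blast
next
  fix a b c d assume "a\<in>Gr" "b\<in>Gr" "c\<in>Gr" "d\<in>Gr" "E a b c d" thus "E a (ml (ng un) c) (ml (ng un) b) d" by (rule SG4)
next
  fix a b c d g assume "a\<in>Gr" "b\<in>Gr" "c\<in>Gr" "d\<in>Gr" "g\<in>Gr" "E a b c d"
  thus "E (ml g a) (ml g b) (ml g c) (ml g d)" by (rule E_scale)
next
  fix a1 a2 a3 b1 b2 b3 c1 c2 c3 assume g: "a1\<in>Gr" "a2\<in>Gr" "a3\<in>Gr" "b1\<in>Gr" "b2\<in>Gr" "b3\<in>Gr" "c1\<in>Gr" "c2\<in>Gr" "c3\<in>Gr"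
    and t: "T a1 a2 a3 b1 b2 b3 \<and> T b1 b2 b3 c1 c2 c3"
  thus "T a1 a2 a3 c1 c2 c3" using T_trans[OF g] by blast
qed

end

lemma hom_C: "mr_hom F K \<sigma> \<Longrightarrow> a \<in> mcarrier F \<Longrightarrow> \<sigma> a \<in> mcarrier K"
  unfolding mr_hom_def by blast
lemma hom_add: "mr_hom F K \<sigma> \<Longrightarrow> a \<in> mcarrier F \<Longrightarrow> b \<in> mcarrier F \<Longrightarrow> c \<in> mcarrier F \<Longrightarrow>
   c \<in> madd F a b \<Longrightarrow> \<sigma> c \<in> madd K (\<sigma> a) (\<sigma> b)"
  unfolding mr_hom_def by blast
lemma hom_neg: "mr_hom F K \<sigma> \<Longrightarrow> a \<in> mcarrier F \<Longrightarrow> \<sigma> (mneg F a) = mneg K (\<sigma> a)"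
  unfolding mr_hom_def by blast
lemma hom_mul: "mr_hom F K \<sigma> \<Longrightarrow> a \<in> mcarrier F \<Longrightarrow> b \<in> mcarrier F \<Longrightarrow> \<sigma> (mmul F a b) = mmul K (\<sigma> a) (\<sigma> b)"
  unfolding mr_hom_def by blast
lemma hom_one: "mr_hom F K \<sigma> \<Longrightarrow> \<sigma> (mone F) = mone K"
  unfolding mr_hom_def by blast

lemma hom_G:
  assumes "special_multifield F" "special_multifield K" "mr_hom F K \<sigma>" "a \<in> nonzeros F"
  shows "\<sigma> a \<in> nonzeros K"
proof -
  interpret FF: smf F by (unfold_locales, rule assms(1))
  interpret KK: smf K by (unfold_locales, rule assms(2))
  have aC: "a \<in> mcarrier F" using assms(4) FF.GC by blast
  have sC: "\<sigma> a \<in> mcarrier K" using hom_C[OF assms(3) aC] .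
  have "mone K = \<sigma> (mone F)" using hom_one[OF assms(3)] by simp
  also have "\<dots> = \<sigma> (mmul F a a)" using FF.sq[OF assms(4)] by simp
  also have "\<dots> = mmul K (\<sigma> a) (\<sigma> a)" using hom_mul[OF assms(3) aC aC] .
  finally have 1: "mone K = mmul K (\<sigma> a) (\<sigma> a)" .
  have "\<sigma> a \<noteq> mzero K"
  proof
    assume z: "\<sigma> a = mzero K"
    have "mone K = mzero K" using 1 z KK.mzero_r[OF KK.zr_C] by simp
    thus False using KK.un_zr by blast
  qed
  thus ?thesis using sC KK.Gr_iff by blast
qed

theorem corollary5p11:
  shows "(\<forall>F :: ('a, 'x) mring_scheme. special_multifield F \<longrightarrow> special_group (S_obj F)) \<and>
    (\<forall>(F :: ('a, 'x) mring_scheme) (K :: ('b, 'y) mring_scheme) \<sigma>.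
        special_multifield F \<and> special_multifield K \<and> mr_hom F K \<sigma> \<longrightarrow>
        sg_hom (S_obj F) (S_obj K) (S_mor F \<sigma>)) \<and>
    (\<forall>F :: ('a, 'x) mring_scheme. special_multifield F \<longrightarrow>
        (\<forall>x\<in>scarrier (S_obj F). S_mor F id x = id x)) \<and>
    (\<forall>(F :: ('a, 'x) mring_scheme) (K :: ('b, 'y) mring_scheme) (L :: ('c, 'z) mring_scheme) \<sigma> \<tau>.
        special_multifield F \<and> special_multifield K \<and> special_multifield L \<and>
        mr_hom F K \<sigma> \<and> mr_hom K L \<tau> \<longrightarrow>
        (\<forall>x\<in>scarrier (S_obj F). S_mor F (\<tau> \<circ> \<sigma>) x = (S_mor K \<tau> \<circ> S_mor F \<sigma>) x))"
proof (intro conjI allI impI)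
  fix F :: "('a, 'x) mring_scheme" assume "special_multifield F"
  then interpret FF: smf F by (rule smf.intro)
  show "special_group (S_obj F)" by (rule FF.SG)
next
  fix F :: "('a, 'x) mring_scheme" and K :: "('b, 'y) mring_scheme" and \<sigma>
  assume a: "special_multifield F \<and> special_multifield K \<and> mr_hom F K \<sigma>"
  have a1: "special_multifield F" using a by (rule conjunct1)
  have a2: "special_multifield K" using a by (elim conjE)
  have h: "mr_hom F K \<sigma>" using a by (elim conjE)
  interpret FF: smf F by (rule smf.intro, rule a1)
  interpret KK: smf K by (rule smf.intro, rule a2)
  have G: "\<And>x. x \<in> nonzeros F \<Longrightarrow> \<sigma> x \<in> nonzeros K" by (rule hom_G[OF a1 a2 h])
  show "sg_hom (S_obj F) (S_obj K) (S_mor F \<sigma>)"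
    unfolding sg_hom_def FF.sc KK.sc
  proof (intro conjI ballI impI)
    fix x assume "x \<in> nonzeros F" thus "S_mor F \<sigma> x \<in> nonzeros K"
      using G unfolding S_mor_def by simp
  next
    fix x y assume xy: "x \<in> nonzeros F" "y \<in> nonzeros F"
    have "mmul F x y \<in> nonzeros F" by (rule FF.mul_G[OF xy])
    hence "S_mor F \<sigma> (mmul F x y) = \<sigma> (mmul F x y)" unfolding S_mor_def by simp
    also have "\<dots> = mmul K (\<sigma> x) (\<sigma> y)" by (rule hom_mul[OF h FF.GC[OF xy(1)] FF.GC[OF xy(2)]])
    finally show "S_mor F \<sigma> (mmul F x y) = mmul K (S_mor F \<sigma> x) (S_mor F \<sigma> y)"
      using xy unfolding S_mor_def by simp
  next
    have "S_mor F \<sigma> (mneg F (mone F)) = \<sigma> (mneg F (mone F))" using FF.negun_G unfolding S_mor_def by simp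
    also have "\<dots> = mneg K (\<sigma> (mone F))" using hom_neg[OF h FF.un_C] .
    also have "\<dots> = mneg K (mone K)" using hom_one[OF h] by simp
    finally show "S_mor F \<sigma> (mneg F (mone F)) = mneg K (mone K)" .
  next
    fix a b c d assume g: "a \<in> nonzeros F" "b \<in> nonzeros F" "c \<in> nonzeros F" "d \<in> nonzeros F"
      and e: "FF.E a b c d"
    have C: "a \<in> mcarrier F" "b \<in> mcarrier F" "c \<in> mcarrier F" "d \<in> mcarrier F" using g FF.GC by auto
    have e1: "mmul F a b = mmul F c d" and e2: "a \<in> madd F c d" using e unfolding FF.E_def by auto
    have "mmul K (\<sigma> a) (\<sigma> b) = \<sigma> (mmul F a b)" using hom_mul[OF h C(1) C(2)] by simp
    also have "\<dots> = \<sigma> (mmul F c d)" using e1 by simp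
    also have "\<dots> = mmul K (\<sigma> c) (\<sigma> d)" using hom_mul[OF h C(3) C(4)] .
    finally have 1: "mmul K (\<sigma> a) (\<sigma> b) = mmul K (\<sigma> c) (\<sigma> d)" .
    have 2: "\<sigma> a \<in> madd K (\<sigma> c) (\<sigma> d)" using hom_add[OF h C(3) C(4) C(1) e2] .
    have "KK.E (\<sigma> a) (\<sigma> b) (\<sigma> c) (\<sigma> d)" using 1 2 unfolding KK.E_def by blast
    thus "KK.E (S_mor F \<sigma> a) (S_mor F \<sigma> b) (S_mor F \<sigma> c) (S_mor F \<sigma> d)"
      using g unfolding S_mor_def by simp
  qed
next
  fix F :: "('a, 'x) mring_scheme" assume "special_multifield F"
  show "\<forall>x\<in>scarrier (S_obj F). S_mor F id x = id x"
    by (simp add: S_obj_def S_mor_def)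
next
  fix F :: "('a, 'x) mring_scheme" and K :: "('b, 'y) mring_scheme" and L :: "('c, 'z) mring_scheme"
    and \<sigma> \<tau>
  assume a: "special_multifield F \<and> special_multifield K \<and> special_multifield L \<and> mr_hom F K \<sigma> \<and> mr_hom K L \<tau>"
  have G: "\<And>x. x \<in> nonzeros F \<Longrightarrow> \<sigma> x \<in> nonzeros K"
    using hom_G[of F K \<sigma>] a by (elim conjE) blast
  show "\<forall>x\<in>scarrier (S_obj F). S_mor F (\<tau> \<circ> \<sigma>) x = (S_mor K \<tau> \<circ> S_mor F \<sigma>) x"
    using G by (simp add: S_obj_def S_mor_def)
qed

end
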